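(* Let $\psi$ be a convex function $\psi:\mathbb{R}^n\to\mathbb{R}\cup\{+\infty\}$ whose domain has nonempty interior, and let $F_1,F_2:\mathbb{R}\to(0,\infty)$ be measurable with $0<I(F_1\circ\psi,\psi)<\infty$ and $0<I(F_2\circ\psi^*,\psi^* )<\infty$. Then: (a) For $h\in\Phi$, $$as_{h,F_1,F_2}^{orlicz}(\psi)\le I(F_1\circ\psi,\psi)\cdot h\Big(\frac{(\sqrt{2\pi})^n}{I(F_2\circ\psi^*,\psi^* )}\Big),$$ and if in addition $F_2\circ\psi^*$ is log-concave, $$as_{h,F_1,F_2}^{orlicz}(\psi)\le G_{h,F_1,F_2}^{orlicz}(\psi)\le I(F_1\circ\psi,\psi)\cdot h\Big(\frac{(\sqrt{2\pi})^n}{I(F_2\circ\psi^*,\psi^* )}\Big).$$ In particular, for $h\in\Phi$ and $f=e^{-\psi}$ (with $f^\circ=e^{-\psi^*}$), $$as_h^{orlicz}(f)\le G_h^{orlicz}(f)\le I(f)\cdot h\Big(\frac{(\sqrt{2\pi})^n}{I(f^\circ)}\Big).$$ (b) For $h\in\Psi$, the same inequalities hold reversed: $$as_{h,F_1,F_2}^{orlicz}(\psi)\ge I(F_1\circ\psi,\psi)\cdot h\Big(\frac{(\sqrt{2\pi})^n}{I(F_2\circ\psi^*,\psi^* )}\Big),$$ and if in addition $F_2\circ\psi^*$ is log-concave, $$as_{h,F_1,F_2}^{orlicz}(\psi)\ge G_{h,F_1,F_2}^{orlicz}(\psi)\ge I(F_1\circ\psi,\psi)\cdot h\Big(\frac{(\sqrt{2\pi})^n}{I(F_2\circ\psi^*,\psi^*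 )}\Big);$$ in particular, for $f=e^{-\psi}$, $$as_h^{orlicz}(f)\ge G_h^{orlicz}(f)\ge I(f)\cdot h\Big(\frac{(\sqrt{2\pi})^n}{I(f^\circ)}\Big).$$
   Context: $\psi^*(y)=\sup_{x\in\mathbb{R}^n}(\langle x,y\rangle-\psi(x))$ is the Legendre transform. $X_\psi=\{x:\psi(x)<\infty,\ \nabla^2\psi(x)\text{ (Alexandrov Hessian) exists and is invertible}\}$. For a function $g$ on $X_{\psi^*}$, $I(g,\psi^* )=\int_{X_{\psi^*}}g(y)\,dy$; similarly $I(F_1\circ\psi,\psi)=\int_{X_\psi}F_1(\psi(x))\,dx$, $I(f)=\int f$. $\mathcal{F}^+_{\psi^*}$ is the set of positive integrable functions $g$ on $X_{\psi^*}$ with $0<I(g,\psi^* )<\infty$, and $\mathcal{L}_{\psi^*}$ its subset of log-concave functions. $h:(0,\infty)\to(0,\infty)$ continuous; $\Phi$ is the class of $h$ that are constant or strictly convex; $\Psi$ is the class of $h$ that are constant or increasing strictly concave. The Orlicz mixed integral is $V_{h,F_1,F_2}(\psi,g)=\int_{X_\psi}h\Big(\frac{g(\nabla\psi(x))}{F_2(\langle x,\nabla\psi(x)\rangle-\psi(x))}\Big)F_1(\psi(x))\,dx$. For $h\in\Phi$: $as_{h,F_1,F_2}^{orlicz}(\psi)=\inf_{g\in\mathcal{F}^+_{\psi^*}}V_{h,F_1,F_2}\big(\psi,\frac{(\sqrt{2\pi})^n g}{I(g,\psi^* )}\big)$ and $G_{h,F_1,F_2}^{orlicz}(\psi)$ is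 the same infimum over $g\in\mathcal{L}_{\psi^*}$; for $h\in\Psi$ both are defined with $\sup$ in place of $\inf$. For $f=e^{-\psi}$, $as_h^{orlicz}(f)=as_{h,e^{-t},e^{-t}}^{orlicz}(\psi)$ and $G_h^{orlicz}(f)=G_{h,e^{-t},e^{-t}}^{orlicz}(\psi)$. Functions are assumed smooth and integrable enough for all expressions to be well defined. *)

theory Defs
  imports "HOL-Analysis.Analysis"
begin

definition dom_e :: "('a::euclidean_space \<Rightarrow> ereal) \<Rightarrow> 'a set" where
  "dom_e \<psi> = {x. \<psi> x < \<infinity>}"

definition convex_ereal :: "('a::euclidean_space \<Rightarrow> ereal) \<Rightarrow> bool" where
  "convex_ereal \<psi> \<longleftrightarrow> (\<forall>x. \<psi> x \<noteq> -\<infinity>) \<and>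
     (\<forall>x y t. 0 < t \<and> t < 1 \<longrightarrow>
        \<psi> ((1 - t) *\<^sub>R x + t *\<^sub>R y) \<le> ereal (1 - t) * \<psi> x + ereal t * \<psi> y)"

text \<open>Real-valued version (meaningful where the function is finite).\<close>
definition fin :: "('a \<Rightarrow> ereal) \<Rightarrow> 'a \<Rightarrow> real" where
  "fin \<psi> x = real_of_ereal (\<psi> x)"

definition legendre :: "('a::euclidean_space \<Rightarrow> ereal) \<Rightarrow> 'a \<Rightarrow> ereal" where
  "legendre \<psi> y = (SUP x. ereal (inner x y) - \<psi> x)"

definition grad :: "('a::euclidean_space \<Rightarrow> ereal) \<Rightarrow> 'a \<Rightarrow> 'a" where
  "grad \<psi> x = (THE g. (fin \<psi> has_derivative (\<lambda>v. inner g v)) (at x))"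

definition alex_hessian :: "('a::euclidean_space \<Rightarrow> ereal) \<Rightarrow> 'a \<Rightarrow> ('a \<Rightarrow> 'a) \<Rightarrow> bool" where
  "alex_hessian \<psi> x A \<longleftrightarrow> x \<in> interior (dom_e \<psi>) \<and> linear A \<and>
     (\<forall>u v. inner (A u) v = inner u (A v)) \<and>
     (\<exists>g. ((\<lambda>h. (fin \<psi> (x + h) - fin \<psi> x - inner g h - inner (A h) h / 2) / (norm h)\<^sup>2)
            \<longlongrightarrow> 0) (at 0))"

definition Xset :: "('a::euclidean_space \<Rightarrow> ereal) \<Rightarrow> 'a set" where
  "Xset \<psi> = {x. \<psi> x < \<infinity> \<and> (\<exists>A. alex_hessian \<psi> x A \<and> bij A)}"

definition Iint :: "('a::euclidean_space \<Rightarrow> ereal) \<Rightarrow> ('a \<Rightarrow> real) \<Rightarrow> ennreal" where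
  "Iint \<psi> g = (\<integral>\<^sup>+ x \<in> Xset \<psi>. ennreal (g x) \<partial>lebesgue)"

definition IcompF :: "(real \<Rightarrow> real) \<Rightarrow> ('a::euclidean_space \<Rightarrow> ereal) \<Rightarrow> ennreal" where
  "IcompF F \<psi> = Iint \<psi> (\<lambda>x. F (fin \<psi> x))"

definition const_pos :: "(real \<Rightarrow> real) \<Rightarrow> bool" where
  "const_pos h \<longleftrightarrow> (\<exists>c. \<forall>t>0. h t = c)"

definition strictly_convex_pos :: "(real \<Rightarrow> real) \<Rightarrow> bool" where
  "strictly_convex_pos h \<longleftrightarrow> (\<forall>x>0. \<forall>y>0. \<forall>t. x \<noteq> y \<and> 0 < t \<and> t < 1 \<longrightarrow>
       h ((1 - t) * x + t * y) < (1 - t) * h x + t * h y)"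

definition strictly_concave_pos :: "(real \<Rightarrow> real) \<Rightarrow> bool" where
  "strictly_concave_pos h \<longleftrightarrow> (\<forall>x>0. \<forall>y>0. \<forall>t. x \<noteq> y \<and> 0 < t \<and> t < 1 \<longrightarrow>
       h ((1 - t) * x + t * y) > (1 - t) * h x + t * h y)"

definition PhiClass :: "(real \<Rightarrow> real) set" where
  "PhiClass = {h. const_pos h \<or> strictly_convex_pos h}"

definition PsiClass :: "(real \<Rightarrow> real) set" where
  "PsiClass = {h. const_pos h \<or> (mono_on {0<..} h \<and> strictly_concave_pos h)}"

definition log_concave :: "('a::euclidean_space \<Rightarrow> real) \<Rightarrow> bool" where
  "log_concave G \<longleftrightarrow> (\<forall>x. 0 \<le> G x) \<and>
     (\<forall>x y t. 0 \<le> t \<and> t \<le> 1 \<longrightarrow> G x powr (1 - t) * G y powr t \<le> G ((1 - t) *\<^sub>R x + t *\<^sub>R y))"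

definition log_concave_on :: "'a::euclidean_space set \<Rightarrow> ('a \<Rightarrow> real) \<Rightarrow> bool" where
  "log_concave_on Y g \<longleftrightarrow> (\<exists>G. log_concave G \<and> (\<forall>y\<in>Y. G y = g y))"

definition Fplus :: "('a::euclidean_space \<Rightarrow> ereal) \<Rightarrow> ('a \<Rightarrow> real) set" where
  "Fplus \<psi> = {g. (\<forall>y\<in>Xset (legendre \<psi>). 0 < g y) \<and>
      set_borel_measurable lebesgue (Xset (legendre \<psi>)) g \<and>
      0 < Iint (legendre \<psi>) g \<and> Iint (legendre \<psi>) g < \<infinity>}"

definition Lclass :: "('a::euclidean_space \<Rightarrow> ereal) \<Rightarrow> ('a \<Rightarrow> real) set" where
  "Lclass \<psi> = {g \<in> Fplus \<psi>. log_concave_on (Xset (legendre \<psi>)) g}"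

definition Vorlicz :: "(real \<Rightarrow> real) \<Rightarrow> (real \<Rightarrow> real) \<Rightarrow> (real \<Rightarrow> real) \<Rightarrow>
    ('a::euclidean_space \<Rightarrow> ereal) \<Rightarrow> ('a \<Rightarrow> real) \<Rightarrow> ennreal" where
  "Vorlicz h F1 F2 \<psi> g = (\<integral>\<^sup>+ x \<in> Xset \<psi>.
      ennreal (h (g (grad \<psi> x) / F2 (inner x (grad \<psi> x) - fin \<psi> x)) * F1 (fin \<psi> x)) \<partial>lebesgue)"

definition normalize :: "('a::euclidean_space \<Rightarrow> ereal) \<Rightarrow> ('a \<Rightarrow> real) \<Rightarrow> 'a \<Rightarrow> real" where
  "normalize \<psi> g = (\<lambda>y. sqrt (2 * pi) ^ DIM('a) * g y / enn2real (Iint (legendre \<psi>) g))"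

definition as_orlicz_inf :: "(real \<Rightarrow> real) \<Rightarrow> (real \<Rightarrow> real) \<Rightarrow> (real \<Rightarrow> real) \<Rightarrow>
    ('a::euclidean_space \<Rightarrow> ereal) \<Rightarrow> ennreal" where
  "as_orlicz_inf h F1 F2 \<psi> = (INF g \<in> Fplus \<psi>. Vorlicz h F1 F2 \<psi> (normalize \<psi> g))"

definition G_orlicz_inf :: "(real \<Rightarrow> real) \<Rightarrow> (real \<Rightarrow> real) \<Rightarrow> (real \<Rightarrow> real) \<Rightarrow>
    ('a::euclidean_space \<Rightarrow> ereal) \<Rightarrow> ennreal" where
  "G_orlicz_inf h F1 F2 \<psi> = (INF g \<in> Lclass \<psi>. Vorlicz h F1 F2 \<psi> (normalize \<psi> g))"

definition as_orlicz_sup :: "(real \<Rightarrow> real) \<Rightarrow> (real \<Rightarrow> real) \<Rightarrow> (real \<Rightarrow> real) \<Rightarrow>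
    ('a::euclidean_space \<Rightarrow> ereal) \<Rightarrow> ennreal" where
  "as_orlicz_sup h F1 F2 \<psi> = (SUP g \<in> Fplus \<psi>. Vorlicz h F1 F2 \<psi> (normalize \<psi> g))"

definition G_orlicz_sup :: "(real \<Rightarrow> real) \<Rightarrow> (real \<Rightarrow> real) \<Rightarrow> (real \<Rightarrow> real) \<Rightarrow>
    ('a::euclidean_space \<Rightarrow> ereal) \<Rightarrow> ennreal" where
  "G_orlicz_sup h F1 F2 \<psi> = (SUP g \<in> Lclass \<psi>. Vorlicz h F1 F2 \<psi> (normalize \<psi> g))"

definition orlicz_bound :: "(real \<Rightarrow> real) \<Rightarrow> (real \<Rightarrow> real) \<Rightarrow> (real \<Rightarrow> real) \<Rightarrow>
    ('a::euclidean_space \<Rightarrow> ereal) \<Rightarrow> ennreal" where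
  "orlicz_bound h F1 F2 \<psi> = IcompF F1 \<psi> *
      ennreal (h (sqrt (2 * pi) ^ DIM('a) / enn2real (IcompF F2 (legendre \<psi>))))"

text \<open>The functional case f = exp(-psi): F1 = F2 = exp(-t).\<close>
definition expneg :: "real \<Rightarrow> real" where
  "expneg t = exp (- t)"

end

theory Submission
  imports Defs
begin


definition tn :: "nat \<Rightarrow> real" where "tn n = 1 / real (Suc n)"

lemma tn_pos: "tn n > 0" by (simp add: tn_def)

lemma tn_tendsto: "tn \<longlonglongrightarrow> 0"
  unfolding tn_def using LIMSEQ_Suc[OF lim_inverse_n'] by simp

lemma seq_lemma:
  fixes R :: "'a::euclidean_space \<Rightarrow> real"
  assumes lim: "((\<lambda>h. R h / (norm h)\<^sup>2) \<longlongrightarrow> 0) (at 0)" and R0: "R 0 = 0"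
  shows "((\<lambda>n. R (tn n *\<^sub>R v) / (tn n)\<^sup>2) \<longlongrightarrow> 0) sequentially"
proof (cases "v = 0")
  case True then show ?thesis using R0 by simp
next
  case False
  have t: "((\<lambda>n. tn n *\<^sub>R v) \<longlongrightarrow> 0) sequentially"
    using tendsto_scaleR[OF tn_tendsto tendsto_const[of v]] by simp
  have nz: "\<forall>n. tn n *\<^sub>R v \<noteq> 0" using False tn_pos by (metis less_irrefl scaleR_eq_0_iff)
  have fl: "filterlim (\<lambda>n. tn n *\<^sub>R v) (at 0) sequentially"
    by (intro filterlim_atI[OF t] always_eventually nz)
  have "((\<lambda>n. R (tn n *\<^sub>R v) / (norm (tn n *\<^sub>R v))\<^sup>2) \<longlongrightarrow> 0) sequentially"
    using filterlim_compose[OF lim fl] by simp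
  then have "((\<lambda>n. R (tn n *\<^sub>R v) / (norm (tn n *\<^sub>R v))\<^sup>2 * (norm v)\<^sup>2) \<longlongrightarrow> 0) sequentially"
    using tendsto_mult_left_zero by blast
  moreover have "R (tn n *\<^sub>R v) / (norm (tn n *\<^sub>R v))\<^sup>2 * (norm v)\<^sup>2 = R (tn n *\<^sub>R v) / (tn n)\<^sup>2" for n
    using False tn_pos[of n] by (simp add: power_mult_distrib)
  ultimately show ?thesis by simp
qed

lemma dense_le:
  fixes p q :: "'a::topological_space \<Rightarrow> real"
  assumes D: "\<And>X. open X \<Longrightarrow> X \<noteq> {} \<Longrightarrow> \<exists>d\<in>D. d \<in> X"
    and W: "open W" and cp: "continuous_on W p" and cq: "continuous_on W q"
    and le: "\<And>d. d \<in> D \<Longrightarrow> d \<in> W \<Longrightarrow> p d \<le> q d" and w: "w \<in> W"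
  shows "p w \<le> q w"
proof (rule ccontr)
  assume nle: "\<not> p w \<le> q w"
  have c: "continuous_on W (\<lambda>x. p x - q x)" using cp cq by (rule continuous_on_diff)
  have "\<forall>B. open B \<longrightarrow> open ((\<lambda>x. p x - q x) -` B \<inter> W)"
    using iffD1[OF continuous_on_open_vimage[OF W] c] .
  then have op: "open ((\<lambda>x. p x - q x) -` {0<..} \<inter> W)" by simp
  have "w \<in> (\<lambda>x. p x - q x) -` {0<..} \<inter> W" using nle w by simp
  then have "(\<lambda>x. p x - q x) -` {0<..} \<inter> W \<noteq> {}" by blast
  then obtain d where d: "d \<in> D" "d \<in> (\<lambda>x. p x - q x) -` {0<..} \<inter> W"
    using D[OF op] by blast
  then have "p d > q d" "d \<in> W" by auto
  then show False using le[OF d(1)] by linarith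
qed

lemma alg1: fixes t :: real assumes "t > 0" "F = f0 + t * G + t\<^sup>2 * a + t\<^sup>2 * q"
  shows "(1 / t) * (F - f0) = G + t * (a + q)"
  using assms by (simp add: field_simps power2_eq_square)

lemma alg2: fixes t :: real assumes "t > 0" "gij = gi + gj"
  shows "(1 / t)\<^sup>2 * ((f0 + t * gij + t\<^sup>2 * a1 + t\<^sup>2 * q1) - (f0 + t * gi + t\<^sup>2 * a2 + t\<^sup>2 * q2)
     - (f0 + t * gj + t\<^sup>2 * a3 + t\<^sup>2 * q3) + f0) = (a1 - a2 - a3) + (q1 - q2 - q3)"
  using assms by (simp add: field_simps power2_eq_square)

lemma ident:
  fixes f ft :: "'a::euclidean_space \<Rightarrow> real"
  assumes U: "open U" "y \<in> U" and eq: "\<And>z. z \<in> U \<Longrightarrow> ft z = f z"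
    and A: "linear A" "\<And>u v. inner (A u) v = inner u (A v)"
    and lim: "((\<lambda>h. (f (y + h) - f y - inner g h - inner (A h) h / 2) / (norm h)\<^sup>2) \<longlongrightarrow> 0) (at 0)"
  shows "lim (\<lambda>n. real (Suc n) * (ft (y + tn n *\<^sub>R v) - ft y)) = inner g v"
    and "lim (\<lambda>n. (real (Suc n))\<^sup>2 * (ft (y + tn n *\<^sub>R (i + j)) - ft (y + tn n *\<^sub>R i)
            - ft (y + tn n *\<^sub>R j) + ft y)) = inner (A i) j"
proof -
  define R where "R h = f (y + h) - f y - inner g h - inner (A h) h / 2" for h
  have R0: "R 0 = 0" using A(1) by (simp add: R_def linear_0)
  have limR: "((\<lambda>h. R h / (norm h)\<^sup>2) \<longlongrightarrow> 0) (at 0)" using lim by (simp add: R_def)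
  have sR: "((\<lambda>n. R (tn n *\<^sub>R w) / (tn n)\<^sup>2) \<longlongrightarrow> 0) sequentially" for w
    using seq_lemma[OF limR R0] .
  obtain r where r: "r > 0" "ball y r \<subseteq> U" using U openE by blast
  have ev: "eventually (\<lambda>n. ft (y + tn n *\<^sub>R w) = f (y + tn n *\<^sub>R w)) sequentially" for w
  proof -
    have tt: "((\<lambda>n. tn n * norm w) \<longlongrightarrow> 0 * norm w) sequentially"
      by (intro tendsto_intros tn_tendsto)
    have "eventually (\<lambda>n. tn n * norm w < r) sequentially" using order_tendstoD(2)[OF tt, of r] r(1) by simp
    then show ?thesis
    proof (rule eventually_mono)
      fix n assume "tn n * norm w < r"
      then have "y + tn n *\<^sub>R w \<in> ball y r" using tn_pos[of n] by (simp add: dist_norm)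
      then show "ft (y + tn n *\<^sub>R w) = f (y + tn n *\<^sub>R w)" using r eq by blast
    qed
  qed
  have fy: "ft y = f y" using eq U by simp
  have expand: "f (y + tn n *\<^sub>R w) = f y + tn n * inner g w + (tn n)\<^sup>2 * (inner (A w) w / 2)
      + (tn n)\<^sup>2 * (R (tn n *\<^sub>R w) / (tn n)\<^sup>2)" for n w
  proof -
    have "(tn n)\<^sup>2 * (R (tn n *\<^sub>R w) / (tn n)\<^sup>2) = R (tn n *\<^sub>R w)" using tn_pos[of n] by simp
    moreover have "A (tn n *\<^sub>R w) = tn n *\<^sub>R A w" using A(1) by (simp add: linear_scale)
    ultimately show ?thesis by (simp add: R_def power2_eq_square algebra_simps)
  qed
  have sucn: "real (Suc n) = 1 / tn n" for n by (simp add: tn_def)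
  show "lim (\<lambda>n. real (Suc n) * (ft (y + tn n *\<^sub>R v) - ft y)) = inner g v"
  proof (rule limI)
    have "((\<lambda>n. inner g v + tn n * (inner (A v) v / 2 + R (tn n *\<^sub>R v) / (tn n)\<^sup>2)) \<longlongrightarrow>
        inner g v + 0 * (inner (A v) v / 2 + 0)) sequentially"
      by (intro tendsto_intros tn_tendsto sR)
    then have L: "((\<lambda>n. inner g v + tn n * (inner (A v) v / 2 + R (tn n *\<^sub>R v) / (tn n)\<^sup>2)) \<longlongrightarrow>
        inner g v) sequentially" by simp
    have "eventually (\<lambda>n. inner g v + tn n * (inner (A v) v / 2 + R (tn n *\<^sub>R v) / (tn n)\<^sup>2)
        = real (Suc n) * (ft (y + tn n *\<^sub>R v) - ft y)) sequentially"
      using ev[of v]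
    proof (rule eventually_mono)
      fix n assume "ft (y + tn n *\<^sub>R v) = f (y + tn n *\<^sub>R v)"
      then show "inner g v + tn n * (inner (A v) v / 2 + R (tn n *\<^sub>R v) / (tn n)\<^sup>2)
        = real (Suc n) * (ft (y + tn n *\<^sub>R v) - ft y)"
        unfolding sucn fy using alg1[OF tn_pos expand[of n v]] by simp
    qed
    then show "(\<lambda>n. real (Suc n) * (ft (y + tn n *\<^sub>R v) - ft y)) \<longlonglongrightarrow> inner g v"
      by (rule Lim_transform_eventually[OF L])
  qed
  show "lim (\<lambda>n. (real (Suc n))\<^sup>2 * (ft (y + tn n *\<^sub>R (i + j)) - ft (y + tn n *\<^sub>R i)
            - ft (y + tn n *\<^sub>R j) + ft y)) = inner (A i) j"
  proof (rule limI)
    have "((\<lambda>n. inner (A i) j + (R (tn n *\<^sub>R (i + j)) / (tn n)\<^sup>2 - R (tn n *\<^sub>R i) / (tn n)\<^sup>2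
        - R (tn n *\<^sub>R j) / (tn n)\<^sup>2)) \<longlongrightarrow> inner (A i) j + (0 - 0 - 0)) sequentially"
      by (intro tendsto_intros sR)
    then have L: "((\<lambda>n. inner (A i) j + (R (tn n *\<^sub>R (i + j)) / (tn n)\<^sup>2 - R (tn n *\<^sub>R i) / (tn n)\<^sup>2
        - R (tn n *\<^sub>R j) / (tn n)\<^sup>2)) \<longlongrightarrow> inner (A i) j) sequentially" by simp
    have quad: "inner (A (i + j)) (i + j) / 2 - inner (A i) i / 2 - inner (A j) j / 2 = inner (A i) j"
    proof -
      have "inner (A j) i = inner (A i) j" using A(2)[of j i] by (simp add: inner_commute)
      then show ?thesis using A(1) by (simp add: linear_add inner_add_left inner_add_right field_simps)
    qed
    have "eventually (\<lambda>n. inner (A i) j + (R (tn n *\<^sub>R (i + j)) / (tn n)\<^sup>2 - R (tn n *\<^sub>R i) / (tn n)\<^sup>2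
        - R (tn n *\<^sub>R j) / (tn n)\<^sup>2) = (real (Suc n))\<^sup>2 * (ft (y + tn n *\<^sub>R (i + j)) - ft (y + tn n *\<^sub>R i)
            - ft (y + tn n *\<^sub>R j) + ft y)) sequentially"
      using eventually_conj[OF ev[of "i+j"] eventually_conj[OF ev[of i] ev[of j]]]
    proof (rule eventually_mono)
      fix n assume "ft (y + tn n *\<^sub>R (i + j)) = f (y + tn n *\<^sub>R (i + j)) \<and>
          ft (y + tn n *\<^sub>R i) = f (y + tn n *\<^sub>R i) \<and> ft (y + tn n *\<^sub>R j) = f (y + tn n *\<^sub>R j)"
      then have e: "ft (y + tn n *\<^sub>R (i + j)) = f (y + tn n *\<^sub>R (i + j))"
          "ft (y + tn n *\<^sub>R i) = f (y + tn n *\<^sub>R i)" "ft (y + tn n *\<^sub>R j) = f (y + tn n *\<^sub>R j)" by auto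
      show "inner (A i) j + (R (tn n *\<^sub>R (i + j)) / (tn n)\<^sup>2 - R (tn n *\<^sub>R i) / (tn n)\<^sup>2
        - R (tn n *\<^sub>R j) / (tn n)\<^sup>2) = (real (Suc n))\<^sup>2 * (ft (y + tn n *\<^sub>R (i + j)) - ft (y + tn n *\<^sub>R i)
            - ft (y + tn n *\<^sub>R j) + ft y)"
        unfolding sucn fy e expand alg2[OF tn_pos inner_add_right] quad by simp
    qed
    then show "(\<lambda>n. (real (Suc n))\<^sup>2 * (ft (y + tn n *\<^sub>R (i + j)) - ft (y + tn n *\<^sub>R i)
            - ft (y + tn n *\<^sub>R j) + ft y)) \<longlonglongrightarrow> inner (A i) j"
      by (rule Lim_transform_eventually[OF L])
  qed
qed



lemma ereal_fin: assumes "\<phi> x \<noteq> -\<infinity>" "\<phi> x < \<infinity>" shows "\<phi> x = ereal (fin \<phi> x)"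
  using assms by (cases "\<phi> x") (auto simp: fin_def)

lemma cvx_comb:
  assumes c: "convex_ereal \<phi>" and x: "\<phi> x = ereal a" and y: "\<phi> y = ereal b"
    and u: "0 \<le> u" "0 \<le> v" "u + v = 1"
  shows "\<exists>c. \<phi> (u *\<^sub>R x + v *\<^sub>R y) = ereal c \<and> c \<le> u * a + v * b"
proof (cases "v = 0")
  case True then show ?thesis using x u by simp
next
  case v0: False
  show ?thesis
  proof (cases "u = 0")
    case True then show ?thesis using y u by simp
  next
    case False
    have t: "0 < v" "v < 1" using u v0 False by auto
    have u1: "u = 1 - v" using u by simp
    have "\<phi> ((1 - v) *\<^sub>R x + v *\<^sub>R y) \<le> ereal (1 - v) * \<phi> x + ereal v * \<phi> y"
      using c t unfolding convex_ereal_def by blast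
    then have le: "\<phi> (u *\<^sub>R x + v *\<^sub>R y) \<le> ereal (u * a + v * b)"
      using x y u1 by simp
    have "\<phi> (u *\<^sub>R x + v *\<^sub>R y) \<noteq> -\<infinity>" using c unfolding convex_ereal_def by blast
    with le show ?thesis by (cases "\<phi> (u *\<^sub>R x + v *\<^sub>R y)") auto
  qed
qed

lemma cvx_dom: assumes c: "convex_ereal \<phi>" shows "convex (dom_e \<phi>)"
proof (rule convexI)
  fix x y and u v :: real assume xy: "x \<in> dom_e \<phi>" "y \<in> dom_e \<phi>" and uv: "0 \<le> u" "0 \<le> v" "u + v = 1"
  have ninf: "\<And>z. \<phi> z \<noteq> -\<infinity>" using c unfolding convex_ereal_def by blast
  have "\<phi> x = ereal (fin \<phi> x)" "\<phi> y = ereal (fin \<phi> y)"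
    using xy ninf ereal_fin[of \<phi>] by (auto simp: dom_e_def)
  from cvx_comb[OF c this uv] show "u *\<^sub>R x + v *\<^sub>R y \<in> dom_e \<phi>" by (auto simp: dom_e_def)
qed

lemma cvx_on: assumes c: "convex_ereal \<phi>" shows "convex_on (interior (dom_e \<phi>)) (fin \<phi>)"
  unfolding convex_on_def
proof (intro conjI ballI allI impI)
  show "convex (interior (dom_e \<phi>))" using cvx_dom[OF c] by simp
  fix x y and u v :: real assume xy: "x \<in> interior (dom_e \<phi>)" "y \<in> interior (dom_e \<phi>)" and uv: "0 \<le> u" "0 \<le> v" "u + v = 1"
  have ninf: "\<And>z. \<phi> z \<noteq> -\<infinity>" using c unfolding convex_ereal_def by blast
  have "\<phi> x = ereal (fin \<phi> x)" "\<phi> y = ereal (fin \<phi> y)"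
    using xy interior_subset ninf ereal_fin[of \<phi>] by (auto simp: dom_e_def)
  from cvx_comb[OF c this uv] obtain cc where "\<phi> (u *\<^sub>R x + v *\<^sub>R y) = ereal cc" "cc \<le> u * fin \<phi> x + v * fin \<phi> y"
    by blast
  then show "fin \<phi> (u *\<^sub>R x + v *\<^sub>R y) \<le> u * fin \<phi> x + v * fin \<phi> y" by (simp add: fin_def)
qed

lemma leg_ninf: assumes "\<psi> x0 = ereal a0" shows "legendre \<psi> y \<ge> ereal (inner x0 y - a0)"
proof -
  have "ereal (inner x0 y) - \<psi> x0 \<le> legendre \<psi> y" unfolding legendre_def by (rule SUP_upper) simp
  then show ?thesis using assms by simp
qed

lemma leg_cvx:
  fixes \<psi> :: "'a::euclidean_space \<Rightarrow> ereal"
  assumes c: "convex_ereal \<psi>" and x0: "\<psi> x0 = ereal a0"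
  shows "convex_ereal (legendre \<psi>)"
  unfolding convex_ereal_def
proof (intro conjI allI impI)
  fix y show "legendre \<psi> y \<noteq> -\<infinity>" using leg_ninf[of \<psi> x0 a0 y] x0 by auto
next
  fix y1 y2 and t :: real assume t: "0 < t \<and> t < 1"
  show "legendre \<psi> ((1 - t) *\<^sub>R y1 + t *\<^sub>R y2) \<le> ereal (1 - t) * legendre \<psi> y1 + ereal t * legendre \<psi> y2"
    unfolding legendre_def[of \<psi> "(1 - t) *\<^sub>R y1 + t *\<^sub>R y2"]
  proof (rule SUP_least)
    fix x :: 'a assume "x \<in> UNIV"
    show "ereal (inner x ((1 - t) *\<^sub>R y1 + t *\<^sub>R y2)) - \<psi> x \<le> ereal (1 - t) * legendre \<psi> y1 + ereal t * legendre \<psi> y2"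
    proof (cases "\<psi> x")
      case (real r)
      have l1: "ereal (inner x y1 - r) \<le> legendre \<psi> y1"
        using SUP_upper[of x UNIV "\<lambda>x. ereal (inner x y1) - \<psi> x"] real by (simp add: legendre_def)
      have l2: "ereal (inner x y2 - r) \<le> legendre \<psi> y2"
        using SUP_upper[of x UNIV "\<lambda>x. ereal (inner x y2) - \<psi> x"] real by (simp add: legendre_def)
      have "ereal (inner x ((1 - t) *\<^sub>R y1 + t *\<^sub>R y2)) - \<psi> x
          = ereal (1 - t) * ereal (inner x y1 - r) + ereal t * ereal (inner x y2 - r)"
        using real by (simp add: inner_add_right algebra_simps)
      also have "\<dots> \<le> ereal (1 - t) * legendre \<psi> y1 + ereal t * legendre \<psi> y2"
        using t by (intro add_mono ereal_mult_left_mono l1 l2) auto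
      finally show ?thesis .
    next
      case PInf then show ?thesis by simp
    next
      case MInf then show ?thesis using c unfolding convex_ereal_def by blast
    qed
  qed
qed



lemma alg3: fixes n Q s B :: real assumes "n > 0" "\<bar>s\<bar> \<le> B * n\<^sup>2"
  shows "\<bar>Q * n\<^sup>2 + s / 2\<bar> / n \<le> \<bar>Q\<bar> * n + B * n / 2"
proof -
  have "\<bar>Q * n\<^sup>2 + s / 2\<bar> \<le> \<bar>Q\<bar> * n\<^sup>2 + B * n\<^sup>2 / 2"
    using assms(2) abs_triangle_ineq[of "Q * n\<^sup>2" "s/2"] by (simp add: abs_mult)
  also have "\<dots> = (\<bar>Q\<bar> * n + B * n / 2) * n" by (simp add: power2_eq_square algebra_simps)
  finally show ?thesis using assms(1) by (simp add: divide_le_eq)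
qed

lemma expansion_deriv:
  fixes f :: "'a::euclidean_space \<Rightarrow> real"
  assumes A: "linear A"
    and lim: "((\<lambda>h. (f (x + h) - f x - inner g h - inner (A h) h / 2) / (norm h)\<^sup>2) \<longlongrightarrow> 0) (at 0)"
  shows "(f has_derivative (\<lambda>h. inner g h)) (at x)"
  unfolding has_derivative_at
proof
  show "bounded_linear (inner g)" by (rule bounded_linear_inner_right)
  obtain B where B: "B > 0" "\<And>u. norm (A u) \<le> B * norm u" using linear_bounded_pos[OF A] by blast
  define Q where "Q h = (f (x + h) - f x - inner g h - inner (A h) h / 2) / (norm h)\<^sup>2" for h
  have "((\<lambda>h. \<bar>Q h\<bar> * norm h + B * norm h / 2) \<longlongrightarrow> 0 * 0 + B * 0 / 2) (at 0)"
    using lim unfolding Q_def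
    by (intro tendsto_intros tendsto_rabs_zero tendsto_norm_zero tendsto_ident_at) simp_all
  then have g0: "((\<lambda>h. \<bar>Q h\<bar> * norm h + B * norm h / 2) \<longlongrightarrow> 0) (at 0)" by simp
  have ev: "eventually (\<lambda>h. norm (norm (f (x + h) - f x - inner g h) / norm h) \<le> \<bar>Q h\<bar> * norm h + B * norm h / 2) (at 0)"
    unfolding eventually_at_filter
  proof (rule always_eventually, intro allI impI)
    fix h :: 'a assume h: "h \<noteq> 0"
    have n: "norm h > 0" using h by simp
    have s: "\<bar>inner (A h) h\<bar> \<le> B * (norm h)\<^sup>2"
    proof -
      have "norm (A h) * norm h \<le> B * norm h * norm h" by (rule mult_right_mono[OF B(2)]) simp
      then show ?thesis using Cauchy_Schwarz_ineq2[of "A h" h] by (simp add: power2_eq_square mult.assoc)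
    qed
    have e: "f (x + h) - f x - inner g h = Q h * (norm h)\<^sup>2 + inner (A h) h / 2"
      unfolding Q_def using n by simp
    show "norm (norm (f (x + h) - f x - inner g h) / norm h) \<le> \<bar>Q h\<bar> * norm h + B * norm h / 2"
      unfolding e using alg3[OF n s, of "Q h"] by simp
  qed
  show "(\<lambda>h. norm (f (x + h) - f x - inner g h) / norm h) \<midarrow>0\<rightarrow> 0"
    by (rule Lim_null_comparison[OF ev g0])
qed

lemma grad_eq:
  assumes "(fin \<psi> has_derivative (\<lambda>h. inner g h)) (at x)"
  shows "grad \<psi> x = g"
  unfolding grad_def
proof (rule the_equality)
  show "(fin \<psi> has_derivative inner g) (at x)" using assms by simp
  fix g' assume "(fin \<psi> has_derivative inner g') (at x)"
  then have "inner g' = inner g" using has_derivative_unique assms by (metis (no_types, lifting) ext)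
  then have "inner g' (g' - g) = inner g (g' - g)" by simp
  then have "inner (g' - g) (g' - g) = 0" by (simp add: inner_diff_left)
  then show "g' = g" by simp
qed

lemma subgrad:
  fixes \<psi> :: "'a::euclidean_space \<Rightarrow> ereal"
  assumes c: "convex_ereal \<psi>" and d: "(fin \<psi> has_derivative (\<lambda>h. inner g h)) (at x)"
    and xa: "\<psi> x = ereal a" and zb: "\<psi> z = ereal b"
  shows "inner (z - x) g \<le> b - a"
proof -
  define d where "d = z - x"
  have l1: "((\<lambda>t. x + t *\<^sub>R d) has_derivative (\<lambda>t. t *\<^sub>R d)) (at 0)"
    by (auto intro!: derivative_eq_intros)
  have "((\<lambda>t. fin \<psi> (x + t *\<^sub>R d)) has_derivative (\<lambda>t. inner g (t *\<^sub>R d))) (at 0)"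
  proof -
    have "(fin \<psi> has_derivative inner g) (at (x + 0 *\<^sub>R d))" using d by simp
    from has_derivative_compose[OF l1 this] show ?thesis by simp
  qed
  moreover have "(\<lambda>t. inner g (t *\<^sub>R d)) = (*) (inner g d)" by (auto simp: mult.commute)
  ultimately have "((\<lambda>t. fin \<psi> (x + t *\<^sub>R d)) has_real_derivative inner g d) (at 0)"
    by (simp add: has_field_derivative_def)
  then have "((\<lambda>t. (fin \<psi> (x + t *\<^sub>R d) - fin \<psi> x) / t) \<longlongrightarrow> inner g d) (at 0)"
    unfolding DERIV_def by simp
  then have L: "((\<lambda>t. (fin \<psi> (x + t *\<^sub>R d) - fin \<psi> x) / t) \<longlongrightarrow> inner g d) (at_right 0)"
    by (rule tendsto_mono[OF at_le, rotated]) simp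
  have "eventually (\<lambda>t. (fin \<psi> (x + t *\<^sub>R d) - fin \<psi> x) / t \<le> b - a) (at_right 0)"
  proof (rule eventually_at_rightI[of 0 1])
    fix t :: real assume t: "t \<in> {0<..<1}"
    have pt: "(1 - t) *\<^sub>R x + t *\<^sub>R z = x + t *\<^sub>R d" by (simp add: d_def algebra_simps)
    obtain cc where cc: "\<psi> (x + t *\<^sub>R d) = ereal cc" "cc \<le> (1 - t) * a + t * b"
      using cvx_comb[OF c xa zb, of "1 - t" t] t pt by auto
    have "fin \<psi> (x + t *\<^sub>R d) - fin \<psi> x \<le> t * (b - a)"
      using cc xa by (simp add: fin_def algebra_simps)
    then show "(fin \<psi> (x + t *\<^sub>R d) - fin \<psi> x) / t \<le> b - a"
      using t by (simp add: divide_le_eq mult.commute)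
  qed simp
  from tendsto_upperbound[OF L this] show ?thesis by (simp add: d_def inner_commute)
qed

lemma fenchel:
  fixes \<psi> :: "'a::euclidean_space \<Rightarrow> ereal"
  assumes c: "convex_ereal \<psi>" and x: "x \<in> Xset \<psi>"
  shows "fin (legendre \<psi>) (grad \<psi> x) = inner x (grad \<psi> x) - fin \<psi> x"
proof -
  obtain A where xin: "x \<in> interior (dom_e \<psi>)" and A: "linear A"
    and "\<exists>g. ((\<lambda>h. (fin \<psi> (x + h) - fin \<psi> x - inner g h - inner (A h) h / 2) / (norm h)\<^sup>2) \<longlongrightarrow> 0) (at 0)"
    using x unfolding Xset_def alex_hessian_def by blast
  then obtain g where lim: "((\<lambda>h. (fin \<psi> (x + h) - fin \<psi> x - inner g h - inner (A h) h / 2) / (norm h)\<^sup>2) \<longlongrightarrow> 0) (at 0)"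
    by blast
  have d: "(fin \<psi> has_derivative (\<lambda>h. inner g h)) (at x)" by (rule expansion_deriv[OF A lim])
  have gr: "grad \<psi> x = g" by (rule grad_eq[OF d])
  have ninf: "\<And>z. \<psi> z \<noteq> -\<infinity>" using c unfolding convex_ereal_def by blast
  define a where "a = fin \<psi> x"
  have xa: "\<psi> x = ereal a" using xin interior_subset ninf ereal_fin[of \<psi> x] by (auto simp: dom_e_def a_def)
  have "legendre \<psi> g = ereal (inner x g - a)"
    unfolding legendre_def
  proof (rule antisym)
    show "(SUP z. ereal (inner z g) - \<psi> z) \<le> ereal (inner x g - a)"
    proof (rule SUP_least)
      fix z :: 'a assume "z \<in> UNIV"
      show "ereal (inner z g) - \<psi> z \<le> ereal (inner x g - a)"
      proof (cases "\<psi> z")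
        case (real b)
        have "inner (z - x) g \<le> b - a" by (rule subgrad[OF c d xa real])
        then show ?thesis using real by (simp add: inner_diff_left)
      qed (use ninf in auto)
    qed
    show "ereal (inner x g - a) \<le> (SUP z. ereal (inner z g) - \<psi> z)"
      using SUP_upper[of x UNIV "\<lambda>z. ereal (inner z g) - \<psi> z"] xa by simp
  qed
  then show ?thesis unfolding gr by (simp add: fin_def a_def)
qed



definition Ui :: "('a::euclidean_space \<Rightarrow> ereal) \<Rightarrow> 'a set" where
  "Ui \<phi> = interior (dom_e \<phi>)"

definition ftil :: "('a::euclidean_space \<Rightarrow> ereal) \<Rightarrow> 'a \<Rightarrow> real" where
  "ftil \<phi> y = indicator (Ui \<phi>) y * fin \<phi> y"

definition Gv :: "('a::euclidean_space \<Rightarrow> ereal) \<Rightarrow> 'a \<Rightarrow> 'a" where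
  "Gv \<phi> y = (\<Sum>i\<in>Basis. lim (\<lambda>n. real (Suc n) * (ftil \<phi> (y + tn n *\<^sub>R i) - ftil \<phi> y)) *\<^sub>R i)"

definition aij :: "('a::euclidean_space \<Rightarrow> ereal) \<Rightarrow> 'a \<Rightarrow> 'a \<Rightarrow> 'a \<Rightarrow> real" where
  "aij \<phi> y i j = lim (\<lambda>n. (real (Suc n))\<^sup>2 * (ftil \<phi> (y + tn n *\<^sub>R (i + j)) - ftil \<phi> (y + tn n *\<^sub>R i)
            - ftil \<phi> (y + tn n *\<^sub>R j) + ftil \<phi> y))"

definition Am :: "('a::euclidean_space \<Rightarrow> ereal) \<Rightarrow> 'a \<Rightarrow> 'a \<Rightarrow> 'a" where
  "Am \<phi> y u = (\<Sum>j\<in>Basis. (\<Sum>i\<in>Basis. inner u i * aij \<phi> y i j) *\<^sub>R j)"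

definition Qf :: "('a::euclidean_space \<Rightarrow> ereal) \<Rightarrow> 'a \<Rightarrow> 'a \<Rightarrow> real" where
  "Qf \<phi> y h = (ftil \<phi> (y + h) - ftil \<phi> y - inner (Gv \<phi> y) h - inner (Am \<phi> y h) h / 2) / (norm h)\<^sup>2"

lemma ftil_eq: "z \<in> Ui \<phi> \<Longrightarrow> ftil \<phi> z = fin \<phi> z" by (simp add: ftil_def)

lemma open_Ui: "open (Ui \<phi>)" by (simp add: Ui_def)

lemma aij_sym: "aij \<phi> y i j = aij \<phi> y j i"
  unfolding aij_def add.commute[of i j]
  by (rule arg_cong[where f=lim], rule ext) (simp add: algebra_simps)

lemma Am_linear: "linear (Am \<phi> y)"
proof (rule linearI)
  fix b1 b2
  have e: "(\<Sum>i\<in>Basis. inner (b1 + b2) i * aij \<phi> y i j) = (\<Sum>i\<in>Basis. inner b1 i * aij \<phi> y i j) + (\<Sum>i\<in>Basis. inner b2 i * aij \<phi> y i j)" for j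
    by (simp add: inner_add_left distrib_right sum.distrib)
  show "Am \<phi> y (b1 + b2) = Am \<phi> y b1 + Am \<phi> y b2"
    unfolding Am_def e by (simp add: scaleR_add_left sum.distrib)
next
  fix r :: real and b
  have e: "(\<Sum>i\<in>Basis. inner (r *\<^sub>R b) i * aij \<phi> y i j) = r * (\<Sum>i\<in>Basis. inner b i * aij \<phi> y i j)" for j
    by (simp add: sum_distrib_left mult.assoc)
  show "Am \<phi> y (r *\<^sub>R b) = r *\<^sub>R Am \<phi> y b"
    unfolding Am_def e by (simp add: scaleR_sum_right)
qed

lemma Am_sym: "inner (Am \<phi> y u) v = inner u (Am \<phi> y v)"
proof -
  have "inner (Am \<phi> y u) v = (\<Sum>j\<in>Basis. \<Sum>i\<in>Basis. inner u i * aij \<phi> y i j * inner j v)"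
    unfolding Am_def by (simp only: inner_sum_left inner_scaleR_left sum_distrib_right)
  also have "\<dots> = (\<Sum>i\<in>Basis. \<Sum>j\<in>Basis. inner u i * aij \<phi> y i j * inner j v)"
    by (rule sum.swap)
  also have "\<dots> = (\<Sum>i\<in>Basis. \<Sum>j\<in>Basis. inner v j * aij \<phi> y j i * inner u i)"
  proof -
    have "inner u i * aij \<phi> y i j * inner j v = inner v j * aij \<phi> y j i * inner u i" for i j
      by (simp add: aij_sym[of \<phi> y i j] inner_commute[of j v] mult_ac)
    then show ?thesis by (simp only:)
  qed
  also have "\<dots> = inner u (Am \<phi> y v)"
    unfolding Am_def by (simp add: inner_sum_right sum_distrib_left mult_ac)
  finally show ?thesis .
qed

lemma ident2:
  fixes \<phi> :: "'a::euclidean_space \<Rightarrow> ereal"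
  assumes y: "y \<in> Ui \<phi>" and A: "linear A" "\<And>u v. inner (A u) v = inner u (A v)"
    and lim: "((\<lambda>h. (fin \<phi> (y + h) - fin \<phi> y - inner g h - inner (A h) h / 2) / (norm h)\<^sup>2) \<longlongrightarrow> 0) (at 0)"
  shows "Gv \<phi> y = g" "Am \<phi> y = A"
proof -
  note I = ident[OF open_Ui y ftil_eq A lim]
  have "Gv \<phi> y = (\<Sum>i\<in>Basis. inner g i *\<^sub>R i)" unfolding Gv_def by (simp only: I(1))
  then show "Gv \<phi> y = g" by (simp only: euclidean_representation)
  have "aij \<phi> y i j = inner (A i) j" for i j unfolding aij_def by (rule I(2))
  then have "Am \<phi> y u = A u" for u
    unfolding Am_def by (simp add: Linear_Algebra.linear_componentwise[OF A(1), symmetric] euclidean_representation)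
  then show "Am \<phi> y = A" by auto
qed



lemma evU: assumes "y \<in> Ui \<phi>" shows "eventually (\<lambda>h. y + h \<in> Ui \<phi>) (at 0)"
proof -
  obtain r where r: "r > 0" "ball y r \<subseteq> Ui \<phi>" using assms open_Ui openE by blast
  show ?thesis unfolding eventually_at
    using r by (intro exI[of _ r]) (auto simp: dist_norm subset_iff)
qed

lemma Qf_ev: assumes "y \<in> Ui \<phi>"
  shows "eventually (\<lambda>h. Qf \<phi> y h = (fin \<phi> (y + h) - fin \<phi> y - inner (Gv \<phi> y) h - inner (Am \<phi> y h) h / 2) / (norm h)\<^sup>2) (at 0)"
  using evU[OF assms] by eventually_elim (simp add: Qf_def ftil_eq assms)

lemma Xset_char:
  "y \<in> Xset \<phi> \<longleftrightarrow> y \<in> Ui \<phi> \<and> (Qf \<phi> y \<longlongrightarrow> 0) (at 0) \<and> (\<exists>B>0. \<forall>u. B * norm u \<le> norm (Am \<phi> y u))"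
proof
  assume "y \<in> Xset \<phi>"
  then obtain A g where y: "y \<in> Ui \<phi>" and A: "linear A" "\<And>u v. inner (A u) v = inner u (A v)"
    and lim: "((\<lambda>h. (fin \<phi> (y + h) - fin \<phi> y - inner g h - inner (A h) h / 2) / (norm h)\<^sup>2) \<longlongrightarrow> 0) (at 0)"
    and b: "bij A"
    unfolding Xset_def alex_hessian_def Ui_def by blast
  note I = ident2[OF y A lim]
  have "(Qf \<phi> y \<longlongrightarrow> 0) (at 0)"
    using tendsto_cong[OF Qf_ev[OF y]] lim unfolding I by simp
  moreover obtain B where "B > 0" "\<And>u. B * norm u \<le> norm (A u)"
    using linear_inj_bounded_below_pos[OF A(1) bij_is_inj[OF b]] by blast
  ultimately show "y \<in> Ui \<phi> \<and> (Qf \<phi> y \<longlongrightarrow> 0) (at 0) \<and> (\<exists>B>0. \<forall>u. B * norm u \<le> norm (Am \<phi> y u))"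
    using y unfolding I by blast
next
  assume "y \<in> Ui \<phi> \<and> (Qf \<phi> y \<longlongrightarrow> 0) (at 0) \<and> (\<exists>B>0. \<forall>u. B * norm u \<le> norm (Am \<phi> y u))"
  then obtain B where y: "y \<in> Ui \<phi>" and q: "(Qf \<phi> y \<longlongrightarrow> 0) (at 0)" and B: "B > 0" "\<And>u. B * norm u \<le> norm (Am \<phi> y u)"
    by blast
  have lim: "((\<lambda>h. (fin \<phi> (y + h) - fin \<phi> y - inner (Gv \<phi> y) h - inner (Am \<phi> y h) h / 2) / (norm h)\<^sup>2) \<longlongrightarrow> 0) (at 0)"
    using tendsto_cong[OF Qf_ev[OF y]] q by simp
  have inj: "inj (Am \<phi> y)"
  proof (rule injI)
    fix u v assume "Am \<phi> y u = Am \<phi> y v"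
    then have "Am \<phi> y (u - v) = 0" using Am_linear[of \<phi> y] by (simp add: linear_diff)
    then have "B * norm (u - v) \<le> 0" using B(2)[of "u - v"] by simp
    then show "u = v" using B(1) by (simp add: mult_le_0_iff)
  qed
  have "bij (Am \<phi> y)" using inj eucl.linear_inj_imp_surj[OF Am_linear inj] by (simp add: bij_def)
  moreover have "\<phi> y < \<infinity>" using y interior_subset unfolding Ui_def dom_e_def by blast
  moreover have "alex_hessian \<phi> y (Am \<phi> y)"
    unfolding alex_hessian_def using y Am_linear Am_sym lim unfolding Ui_def by blast
  ultimately show "y \<in> Xset \<phi>" unfolding Xset_def by blast
qed



lemma Qf_cont:
  fixes \<phi> :: "'a::euclidean_space \<Rightarrow> ereal"
  assumes cont: "continuous_on (Ui \<phi>) (fin \<phi>)" and y: "y \<in> Ui \<phi>" and r: "ball y r \<subseteq> Ui \<phi>"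
    and s: "s \<le> r"
  shows "continuous_on {h. 0 < norm h \<and> norm h < s} (\<lambda>h. \<bar>Qf \<phi> y h\<bar>)"
proof -
  let ?W = "{h. 0 < norm h \<and> norm h < s}"
  have sub: "(\<lambda>h. y + h) ` ?W \<subseteq> Ui \<phi>" using r s by (auto simp: dist_norm subset_iff)
  have bl: "bounded_linear (Am \<phi> y)" using Am_linear linear_conv_bounded_linear by blast
  have c1: "continuous_on ?W (\<lambda>h. fin \<phi> (y + h))"
    by (rule continuous_on_compose2[OF cont _ sub]) (intro continuous_intros)
  have c2: "continuous_on ?W (Am \<phi> y)" by (rule linear_continuous_on[OF bl])
  have nz: "\<forall>h\<in>?W. (norm h)\<^sup>2 \<noteq> 0" "\<forall>h\<in>?W. (2::real) \<noteq> 0" by simp_all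
  have c3: "continuous_on ?W (\<lambda>h. \<bar>(fin \<phi> (y + h) - fin \<phi> y - inner (Gv \<phi> y) h - inner (Am \<phi> y h) h / 2) / (norm h)\<^sup>2\<bar>)"
    by (intro continuous_on_rabs continuous_on_divide continuous_on_diff continuous_on_inner
        continuous_on_const continuous_on_id c1 c2 continuous_on_power continuous_on_norm nz)
  have eqs: "\<And>h. h \<in> ?W \<Longrightarrow> \<bar>Qf \<phi> y h\<bar> = \<bar>(fin \<phi> (y + h) - fin \<phi> y - inner (Gv \<phi> y) h - inner (Am \<phi> y h) h / 2) / (norm h)\<^sup>2\<bar>"
  proof -
    fix h :: 'a assume "h \<in> ?W"
    then have "y + h \<in> Ui \<phi>" using sub by blast
    then show "\<bar>Qf \<phi> y h\<bar> = \<bar>(fin \<phi> (y + h) - fin \<phi> y - inner (Gv \<phi> y) h - inner (Am \<phi> y h) h / 2) / (norm h)\<^sup>2\<bar>"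
      using y by (simp add: Qf_def ftil_eq)
  qed
  show ?thesis by (rule iffD2[OF continuous_on_cong[OF refl eqs] c3])
qed

lemma E_countable:
  assumes cont: "continuous_on (Ui \<phi>) (fin \<phi>)" and y: "y \<in> Ui \<phi>"
    and dense: "\<And>X. open X \<Longrightarrow> X \<noteq> {} \<Longrightarrow> \<exists>d\<in>range ds. d \<in> X"
  shows "(Qf \<phi> y \<longlongrightarrow> 0) (at 0) \<longleftrightarrow>
    (\<forall>k. \<exists>m. \<forall>n. 0 < norm (ds n) \<and> norm (ds n) < 1 / real (Suc m) \<longrightarrow> \<bar>Qf \<phi> y (ds n)\<bar> \<le> 1 / real (Suc k))"
proof
  assume L: "(Qf \<phi> y \<longlongrightarrow> 0) (at 0)"
  show "\<forall>k. \<exists>m. \<forall>n. 0 < norm (ds n) \<and> norm (ds n) < 1 / real (Suc m) \<longrightarrow> \<bar>Qf \<phi> y (ds n)\<bar> \<le> 1 / real (Suc k)"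
  proof
    fix k
    obtain s where s: "s > 0" "\<And>x. x \<noteq> 0 \<and> norm (x - 0) < s \<Longrightarrow> norm (Qf \<phi> y x - 0) < 1 / real (Suc k)"
      using LIM_D[OF L, of "1 / real (Suc k)"] by auto
    obtain m where m: "inverse (real (Suc m)) < s" using reals_Archimedean[OF s(1)] by blast
    show "\<exists>m. \<forall>n. 0 < norm (ds n) \<and> norm (ds n) < 1 / real (Suc m) \<longrightarrow> \<bar>Qf \<phi> y (ds n)\<bar> \<le> 1 / real (Suc k)"
    proof (intro exI allI impI)
      fix n assume "0 < norm (ds n) \<and> norm (ds n) < 1 / real (Suc m)"
      then have "ds n \<noteq> 0 \<and> norm (ds n - 0) < s" using m by (auto simp: divide_inverse)
      from s(2)[OF this] show "\<bar>Qf \<phi> y (ds n)\<bar> \<le> 1 / real (Suc k)" by simp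
    qed
  qed
next
  assume R: "\<forall>k. \<exists>m. \<forall>n. 0 < norm (ds n) \<and> norm (ds n) < 1 / real (Suc m) \<longrightarrow> \<bar>Qf \<phi> y (ds n)\<bar> \<le> 1 / real (Suc k)"
  obtain rr where rr: "rr > 0" "ball y rr \<subseteq> Ui \<phi>" using y open_Ui openE by blast
  show "(Qf \<phi> y \<longlongrightarrow> 0) (at 0)"
  proof (rule LIM_I)
    fix r :: real assume "0 < r"
    obtain k where k: "inverse (real (Suc k)) < r" using reals_Archimedean[OF \<open>0 < r\<close>] by blast
    obtain m where m: "\<And>n. 0 < norm (ds n) \<and> norm (ds n) < 1 / real (Suc m) \<Longrightarrow> \<bar>Qf \<phi> y (ds n)\<bar> \<le> 1 / real (Suc k)"
      using R by blast
    define s where "s = min (1 / real (Suc m)) rr"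
    have s0: "s > 0" using rr by (simp add: s_def)
    let ?W = "{h. 0 < norm h \<and> norm h < s}"
    have W: "open ?W"
    proof -
      have eq: "?W = ball 0 s - {0}" by (auto simp: dist_norm)
      show ?thesis unfolding eq by (rule open_Diff) auto
    qed
    have cW: "continuous_on ?W (\<lambda>h. \<bar>Qf \<phi> y h\<bar>)" by (rule Qf_cont[OF cont y rr(2)]) (simp add: s_def)
    have le: "\<bar>Qf \<phi> y x\<bar> \<le> 1 / real (Suc k)" if "x \<in> ?W" for x
    proof (rule dense_le[OF dense W cW continuous_on_const _ that])
      fix d assume "d \<in> range ds" "d \<in> ?W"
      then obtain n where n: "d = ds n" "0 < norm (ds n)" "norm (ds n) < s" by auto
      have "norm (ds n) < 1 / real (Suc m)" using n(3) unfolding s_def by linarith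
      then show "\<bar>Qf \<phi> y d\<bar> \<le> 1 / real (Suc k)" using m[of n] n by blast
    qed
    show "\<exists>s>0. \<forall>x. x \<noteq> 0 \<and> norm (x - 0) < s \<longrightarrow> norm (Qf \<phi> y x - 0) < r"
    proof (intro exI[of _ s] conjI allI impI s0)
      fix x :: 'a assume "x \<noteq> 0 \<and> norm (x - 0) < s"
      then have "x \<in> ?W" by simp
      from le[OF this] k show "norm (Qf \<phi> y x - 0) < r" by (simp add: divide_inverse)
    qed
  qed
qed

lemma BB_countable:
  assumes dense: "\<And>X. open X \<Longrightarrow> X \<noteq> {} \<Longrightarrow> \<exists>d\<in>range ds. d \<in> X"
  shows "(\<exists>B>0. \<forall>u. B * norm u \<le> norm (Am \<phi> y u)) \<longleftrightarrow>
    (\<exists>k. \<forall>n. 1 / real (Suc k) * norm (ds n) \<le> norm (Am \<phi> y (ds n)))"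
proof
  assume "\<exists>B>0. \<forall>u. B * norm u \<le> norm (Am \<phi> y u)"
  then obtain B where B: "B > 0" "\<And>u. B * norm u \<le> norm (Am \<phi> y u)" by blast
  obtain k where k: "inverse (real (Suc k)) < B" using reals_Archimedean[OF B(1)] by blast
  have "1 / real (Suc k) * norm (ds n) \<le> norm (Am \<phi> y (ds n))" for n
  proof -
    have "1 / real (Suc k) * norm (ds n) \<le> B * norm (ds n)"
      using k by (intro mult_right_mono) (auto simp: divide_inverse)
    then show ?thesis using B(2)[of "ds n"] by linarith
  qed
  then show "\<exists>k. \<forall>n. 1 / real (Suc k) * norm (ds n) \<le> norm (Am \<phi> y (ds n))" by blast
next
  assume "\<exists>k. \<forall>n. 1 / real (Suc k) * norm (ds n) \<le> norm (Am \<phi> y (ds n))"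
  then obtain k where k: "\<And>n. 1 / real (Suc k) * norm (ds n) \<le> norm (Am \<phi> y (ds n))" by blast
  have bl: "bounded_linear (Am \<phi> y)" using Am_linear linear_conv_bounded_linear by blast
  have c: "continuous_on UNIV (\<lambda>u. norm (Am \<phi> y u))"
    by (intro continuous_intros linear_continuous_on[OF bl])
  have "1 / real (Suc k) * norm u \<le> norm (Am \<phi> y u)" for u
  proof (rule dense_le[OF dense open_UNIV _ c])
    show "continuous_on UNIV (\<lambda>u. 1 / real (Suc k) * norm u)" by (intro continuous_intros)
    fix d assume "d \<in> range ds"
    then obtain n where "d = ds n" by auto
    then show "1 / real (Suc k) * norm d \<le> norm (Am \<phi> y d)" using k[of n] by simp
  qed (simp_all)
  then show "\<exists>B>0. \<forall>u. B * norm u \<le> norm (Am \<phi> y u)"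
    by (intro exI[of _ "1 / real (Suc k)"]) auto
qed



context
  fixes \<phi> :: "'a::euclidean_space \<Rightarrow> ereal"
  assumes cont: "continuous_on (Ui \<phi>) (fin \<phi>)"
begin

lemma Ui_borel[measurable]: "Ui \<phi> \<in> sets borel" by (simp add: open_Ui)

lemma ftil_meas[measurable]: "ftil \<phi> \<in> borel_measurable borel"
proof -
  have "(\<lambda>x. indicator (Ui \<phi>) x *\<^sub>R fin \<phi> x) \<in> borel_measurable borel"
    by (rule borel_measurable_continuous_on_indicator[OF Ui_borel cont])
  then show ?thesis by (simp add: ftil_def[abs_def])
qed

lemma ftil_meas2[measurable]: "(\<lambda>y. ftil \<phi> (y + c)) \<in> borel_measurable borel"
  by measurable

lemma Gv_meas[measurable]: "Gv \<phi> \<in> borel_measurable borel"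
  unfolding Gv_def[abs_def] by measurable

lemma aij_meas[measurable]: "(\<lambda>y. aij \<phi> y i j) \<in> borel_measurable borel"
  unfolding aij_def by measurable

lemma Am_meas[measurable]: "(\<lambda>y. Am \<phi> y u) \<in> borel_measurable borel"
  unfolding Am_def by measurable

lemma Qf_meas[measurable]: "(\<lambda>y. Qf \<phi> y h) \<in> borel_measurable borel"
  unfolding Qf_def by measurable

lemma Xset_meas[measurable]: "Xset \<phi> \<in> sets borel"
proof -
  obtain D :: "'a set" where D: "countable D" "\<And>X. open X \<Longrightarrow> X \<noteq> {} \<Longrightarrow> \<exists>d\<in>D. d \<in> X"
    by (rule countable_dense_setE) blast
  have "D \<noteq> {}" using D(2)[of UNIV] by auto
  define ds where "ds = from_nat_into D"
  have rds: "range ds = D" using D(1) \<open>D \<noteq> {}\<close> by (simp add: ds_def)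
  have dense: "\<And>X. open X \<Longrightarrow> X \<noteq> {} \<Longrightarrow> \<exists>d\<in>range ds. d \<in> X" using D(2) rds by simp
  have "Xset \<phi> = {y \<in> space borel. y \<in> Ui \<phi> \<and>
      (\<forall>k. \<exists>m. \<forall>n. 0 < norm (ds n) \<and> norm (ds n) < 1 / real (Suc m) \<longrightarrow> \<bar>Qf \<phi> y (ds n)\<bar> \<le> 1 / real (Suc k)) \<and>
      (\<exists>k. \<forall>n. 1 / real (Suc k) * norm (ds n) \<le> norm (Am \<phi> y (ds n)))}"
  proof (rule set_eqI)
    fix y show "y \<in> Xset \<phi> \<longleftrightarrow> y \<in> {y \<in> space borel. y \<in> Ui \<phi> \<and>
      (\<forall>k. \<exists>m. \<forall>n. 0 < norm (ds n) \<and> norm (ds n) < 1 / real (Suc m) \<longrightarrow> \<bar>Qf \<phi> y (ds n)\<bar> \<le> 1 / real (Suc k)) \<and>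
      (\<exists>k. \<forall>n. 1 / real (Suc k) * norm (ds n) \<le> norm (Am \<phi> y (ds n)))}"
    proof (cases "y \<in> Ui \<phi>")
      case True
      then show ?thesis using Xset_char[of y \<phi>] E_countable[OF cont True dense] BB_countable[OF dense, of \<phi> y]
        by simp
    next
      case False then show ?thesis using Xset_char[of y \<phi>] by simp
    qed
  qed
  also have "\<dots> \<in> sets borel" by measurable
  finally show ?thesis .
qed

end

lemma restr_meas:
  fixes \<phi> :: "'a::euclidean_space \<Rightarrow> ereal"
    and F :: "real \<Rightarrow> real"
  assumes cont: "continuous_on (Ui \<phi>) (fin \<phi>)" and F: "F \<in> borel_measurable borel"
  shows "(\<lambda>y. indicator (Xset \<phi>) y *\<^sub>R F (fin \<phi> y)) \<in> borel_measurable lebesgue"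
proof -
  note [measurable] = F ftil_meas[OF cont] Xset_meas[OF cont]
  have eq: "(\<lambda>y. indicator (Xset \<phi>) y *\<^sub>R F (fin \<phi> y)) = (\<lambda>y. indicator (Xset \<phi>) y * F (ftil \<phi> y))"
    by (auto simp: indicator_def Xset_char ftil_eq)
  have "(\<lambda>y. indicator (Xset \<phi>) y * F (ftil \<phi> y)) \<in> borel_measurable borel" by measurable
  then have "(\<lambda>y. indicator (Xset \<phi>) y * F (ftil \<phi> y)) \<in> borel_measurable lborel" by simp
  then have "(\<lambda>y. indicator (Xset \<phi>) y * F (ftil \<phi> y)) \<in> borel_measurable lebesgue"
    by (rule measurable_completion)
  then show ?thesis unfolding eq .
qed



lemma cont_fin: "convex_ereal \<phi> \<Longrightarrow> continuous_on (Ui \<phi>) (fin \<phi>)"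
  unfolding Ui_def by (rule convex_on_continuous[OF open_interior cvx_on])

lemma main:
  fixes \<psi> :: "'a::euclidean_space \<Rightarrow> ereal" and F1 F2 h :: "real \<Rightarrow> real"
  assumes cvx: "convex_ereal \<psi>" and dom: "interior (dom_e \<psi>) \<noteq> {}"
    and F1: "\<forall>t. 0 < F1 t" "F1 \<in> borel_measurable borel"
    and F2: "\<forall>t. 0 < F2 t" "F2 \<in> borel_measurable borel"
    and I2: "0 < IcompF F2 (legendre \<psi>)" "IcompF F2 (legendre \<psi>) < \<infinity>"
    and hp: "\<forall>t>0. 0 < h t"
  shows "(\<lambda>y. F2 (fin (legendre \<psi>) y)) \<in> Fplus \<psi>"
    and "Vorlicz h F1 F2 \<psi> (normalize \<psi> (\<lambda>y. F2 (fin (legendre \<psi>) y))) = orlicz_bound h F1 F2 \<psi>"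
proof -
  define \<phi> where "\<phi> = legendre \<psi>"
  define g0 where "g0 = (\<lambda>y. F2 (fin \<phi> y))"
  obtain x0 where x0: "x0 \<in> interior (dom_e \<psi>)" using dom by blast
  have ninf: "\<psi> x0 \<noteq> -\<infinity>" using cvx unfolding convex_ereal_def by blast
  have "\<psi> x0 < \<infinity>" using x0 interior_subset unfolding dom_e_def by blast
  then obtain a0 where a0: "\<psi> x0 = ereal a0" using ninf by (cases "\<psi> x0") auto
  have cphi: "convex_ereal \<phi>" unfolding \<phi>_def by (rule leg_cvx[OF cvx a0])
  have I2': "Iint \<phi> g0 = IcompF F2 (legendre \<psi>)" by (simp add: IcompF_def g0_def \<phi>_def)
  show "(\<lambda>y. F2 (fin (legendre \<psi>) y)) \<in> Fplus \<psi>"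
    unfolding Fplus_def set_borel_measurable_def
    using F2(1) I2 restr_meas[OF cont_fin[OF cphi] F2(2)] I2'
    by (simp add: g0_def \<phi>_def)
  define c where "c = sqrt (2 * pi) ^ DIM('a) / enn2real (IcompF F2 (legendre \<psi>))"
  have Ipos: "enn2real (IcompF F2 (legendre \<psi>)) > 0"
    using I2 by (simp add: enn2real_positive_iff)
  have cpos: "c > 0" unfolding c_def using Ipos by simp
  have hc: "h c > 0" using hp cpos by blast
  have key: "h (normalize \<psi> g0 (grad \<psi> x) / F2 (inner x (grad \<psi> x) - fin \<psi> x)) = h c"
    if x: "x \<in> Xset \<psi>" for x
  proof -
    have fe: "fin \<phi> (grad \<psi> x) = inner x (grad \<psi> x) - fin \<psi> x"
      unfolding \<phi>_def by (rule fenchel[OF cvx x])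
    have p: "F2 (inner x (grad \<psi> x) - fin \<psi> x) > 0" using F2(1) by blast
    show ?thesis unfolding normalize_def g0_def fe I2'[unfolded g0_def] c_def \<phi>_def[symmetric]
      using p by simp
  qed
  have meas1: "(\<lambda>x. ennreal (F1 (fin \<psi> x)) * indicator (Xset \<psi>) x) \<in> borel_measurable lebesgue"
  proof -
    have "(\<lambda>x. ennreal (indicator (Xset \<psi>) x *\<^sub>R F1 (fin \<psi> x))) \<in> borel_measurable lebesgue"
      using restr_meas[OF cont_fin[OF cvx] F1(2)] by measurable
    moreover have "(\<lambda>x. ennreal (indicator (Xset \<psi>) x *\<^sub>R F1 (fin \<psi> x))) = (\<lambda>x. ennreal (F1 (fin \<psi> x)) * indicator (Xset \<psi>) x)"
      by (auto simp: indicator_def)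
    ultimately show ?thesis by simp
  qed
  have "Vorlicz h F1 F2 \<psi> (normalize \<psi> g0) =
      (\<integral>\<^sup>+ x. ennreal (h c) * (ennreal (F1 (fin \<psi> x)) * indicator (Xset \<psi>) x) \<partial>lebesgue)"
    unfolding Vorlicz_def
  proof (rule nn_integral_cong)
    fix x show "ennreal (h (normalize \<psi> g0 (grad \<psi> x) / F2 (inner x (grad \<psi> x) - fin \<psi> x)) * F1 (fin \<psi> x)) *
         indicator (Xset \<psi>) x = ennreal (h c) * (ennreal (F1 (fin \<psi> x)) * indicator (Xset \<psi>) x)"
    proof (cases "x \<in> Xset \<psi>")
      case True
      then show ?thesis using key[OF True] hc F1(1)
        by (simp add: ennreal_mult less_imp_le mult.assoc)
    qed simp
  qed
  also have "\<dots> = ennreal (h c) * IcompF F1 \<psi>"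
    by (simp add: nn_integral_cmult[OF meas1] IcompF_def Iint_def)
  also have "\<dots> = orlicz_bound h F1 F2 \<psi>"
    by (simp add: orlicz_bound_def c_def mult.commute)
  finally show "Vorlicz h F1 F2 \<psi> (normalize \<psi> (\<lambda>y. F2 (fin (legendre \<psi>) y))) = orlicz_bound h F1 F2 \<psi>"
    by (simp add: g0_def \<phi>_def)
qed



lemma expneg_logconc:
  fixes \<phi> :: "'a::euclidean_space \<Rightarrow> ereal"
  assumes c: "convex_ereal \<phi>"
  shows "log_concave_on (Xset \<phi>) (\<lambda>y. expneg (fin \<phi> y))"
proof -
  define G where "G y = (if \<phi> y = \<infinity> then 0 else exp (- fin \<phi> y))" for y
  have ninf: "\<And>z. \<phi> z \<noteq> -\<infinity>" using c unfolding convex_ereal_def by blast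
  have "log_concave G"
    unfolding log_concave_def
  proof (intro conjI allI impI)
    fix x show "0 \<le> G x" by (simp add: G_def)
  next
    fix x y and t :: real assume t: "0 \<le> t \<and> t \<le> 1"
    show "G x powr (1 - t) * G y powr t \<le> G ((1 - t) *\<^sub>R x + t *\<^sub>R y)"
    proof (cases "\<phi> x = \<infinity> \<or> \<phi> y = \<infinity>")
      case True
      then have "G x = 0 \<or> G y = 0" by (auto simp: G_def)
      moreover have "0 \<le> G ((1 - t) *\<^sub>R x + t *\<^sub>R y)" by (simp add: G_def)
      ultimately show ?thesis by auto
    next
      case False
      then obtain a b where ab: "\<phi> x = ereal a" "\<phi> y = ereal b" using ninf
        by (metis ereal_cases)
      obtain cc where cc: "\<phi> ((1 - t) *\<^sub>R x + t *\<^sub>R y) = ereal cc" "cc \<le> (1 - t) * a + t * b"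
        using cvx_comb[OF c ab, of "1 - t" t] t by auto
      have "G x powr (1 - t) * G y powr t = exp (- ((1 - t) * a + t * b))"
        using ab by (simp add: G_def fin_def powr_def exp_add[symmetric] algebra_simps)
      also have "\<dots> \<le> exp (- cc)" using cc(2) by simp
      also have "\<dots> = G ((1 - t) *\<^sub>R x + t *\<^sub>R y)" using cc(1) by (simp add: G_def fin_def)
      finally show ?thesis .
    qed
  qed
  moreover have "\<forall>y\<in>Xset \<phi>. G y = expneg (fin \<phi> y)"
    by (auto simp: Xset_def G_def expneg_def)
  ultimately show ?thesis unfolding log_concave_on_def by blast
qed



lemma parts:
  fixes \<psi> :: "'a::euclidean_space \<Rightarrow> ereal" and F1 F2 h :: "real \<Rightarrow> real"
  assumes g: "(\<lambda>y. F2 (fin (legendre \<psi>) y)) \<in> Fplus \<psi>"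
    and V: "Vorlicz h F1 F2 \<psi> (normalize \<psi> (\<lambda>y. F2 (fin (legendre \<psi>) y))) = orlicz_bound h F1 F2 \<psi>"
  shows "as_orlicz_inf h F1 F2 \<psi> \<le> orlicz_bound h F1 F2 \<psi>"
    and "log_concave_on (Xset (legendre \<psi>)) (\<lambda>y. F2 (fin (legendre \<psi>) y)) \<Longrightarrow>
           as_orlicz_inf h F1 F2 \<psi> \<le> G_orlicz_inf h F1 F2 \<psi> \<and> G_orlicz_inf h F1 F2 \<psi> \<le> orlicz_bound h F1 F2 \<psi>"
    and "as_orlicz_sup h F1 F2 \<psi> \<ge> orlicz_bound h F1 F2 \<psi>"
    and "log_concave_on (Xset (legendre \<psi>)) (\<lambda>y. F2 (fin (legendre \<psi>) y)) \<Longrightarrow>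
           as_orlicz_sup h F1 F2 \<psi> \<ge> G_orlicz_sup h F1 F2 \<psi> \<and> G_orlicz_sup h F1 F2 \<psi> \<ge> orlicz_bound h F1 F2 \<psi>"
proof -
  have sub: "Lclass \<psi> \<subseteq> Fplus \<psi>" by (auto simp: Lclass_def)
  show "as_orlicz_inf h F1 F2 \<psi> \<le> orlicz_bound h F1 F2 \<psi>"
    unfolding as_orlicz_inf_def V[symmetric] by (rule INF_lower[OF g])
  show "as_orlicz_sup h F1 F2 \<psi> \<ge> orlicz_bound h F1 F2 \<psi>"
    unfolding as_orlicz_sup_def V[symmetric] by (rule SUP_upper[OF g])
  assume lc: "log_concave_on (Xset (legendre \<psi>)) (\<lambda>y. F2 (fin (legendre \<psi>) y))"
  then have gL: "(\<lambda>y. F2 (fin (legendre \<psi>) y)) \<in> Lclass \<psi>" using g by (simp add: Lclass_def)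
  show "as_orlicz_inf h F1 F2 \<psi> \<le> G_orlicz_inf h F1 F2 \<psi> \<and> G_orlicz_inf h F1 F2 \<psi> \<le> orlicz_bound h F1 F2 \<psi>"
    unfolding as_orlicz_inf_def G_orlicz_inf_def
    using INF_superset_mono[OF sub order_refl] INF_lower[OF gL, of "\<lambda>g. Vorlicz h F1 F2 \<psi> (normalize \<psi> g)"] V
    by simp
  show "as_orlicz_sup h F1 F2 \<psi> \<ge> G_orlicz_sup h F1 F2 \<psi> \<and> G_orlicz_sup h F1 F2 \<psi> \<ge> orlicz_bound h F1 F2 \<psi>"
    unfolding as_orlicz_sup_def G_orlicz_sup_def
    using SUP_subset_mono[OF sub order_refl] SUP_upper[OF gL, of "\<lambda>g. Vorlicz h F1 F2 \<psi> (normalize \<psi> g)"] V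
    by simp
qed

theorem proposition2p1:
  fixes \<psi> :: "'a::euclidean_space \<Rightarrow> ereal"
    and F1 F2 h :: "real \<Rightarrow> real"
  assumes cvx: "convex_ereal \<psi>"
    and dom: "interior (dom_e \<psi>) \<noteq> {}"
    and F1: "\<forall>t. 0 < F1 t" "F1 \<in> borel_measurable borel"
    and F2: "\<forall>t. 0 < F2 t" "F2 \<in> borel_measurable borel"
    and I1: "0 < IcompF F1 \<psi>" "IcompF F1 \<psi> < \<infinity>"
    and I2: "0 < IcompF F2 (legendre \<psi>)" "IcompF F2 (legendre \<psi>) < \<infinity>"
    and h: "continuous_on {0<..} h" "\<forall>t>0. 0 < h t"
  shows
    "(h \<in> PhiClass \<longrightarrow>
        as_orlicz_inf h F1 F2 \<psi> \<le> orlicz_bound h F1 F2 \<psi> \<and>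
        (log_concave_on (Xset (legendre \<psi>)) (\<lambda>y. F2 (fin (legendre \<psi>) y)) \<longrightarrow>
           as_orlicz_inf h F1 F2 \<psi> \<le> G_orlicz_inf h F1 F2 \<psi> \<and>
           G_orlicz_inf h F1 F2 \<psi> \<le> orlicz_bound h F1 F2 \<psi>) \<and>
        (0 < IcompF expneg \<psi> \<and> IcompF expneg \<psi> < \<infinity> \<and>
         0 < IcompF expneg (legendre \<psi>) \<and> IcompF expneg (legendre \<psi>) < \<infinity> \<longrightarrow>
           as_orlicz_inf h expneg expneg \<psi> \<le> G_orlicz_inf h expneg expneg \<psi> \<and>
           G_orlicz_inf h expneg expneg \<psi> \<le> orlicz_bound h expneg expneg \<psi>))
   \<and> (h \<in> PsiClass \<longrightarrow>
        as_orlicz_sup h F1 F2 \<psi> \<ge> orlicz_bound h F1 F2 \<psi> \<and>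
        (log_concave_on (Xset (legendre \<psi>)) (\<lambda>y. F2 (fin (legendre \<psi>) y)) \<longrightarrow>
           as_orlicz_sup h F1 F2 \<psi> \<ge> G_orlicz_sup h F1 F2 \<psi> \<and>
           G_orlicz_sup h F1 F2 \<psi> \<ge> orlicz_bound h F1 F2 \<psi>) \<and>
        (0 < IcompF expneg \<psi> \<and> IcompF expneg \<psi> < \<infinity> \<and>
         0 < IcompF expneg (legendre \<psi>) \<and> IcompF expneg (legendre \<psi>) < \<infinity> \<longrightarrow>
           as_orlicz_sup h expneg expneg \<psi> \<ge> G_orlicz_sup h expneg expneg \<psi> \<and>
           G_orlicz_sup h expneg expneg \<psi> \<ge> orlicz_bound h expneg expneg \<psi>))"
proof -
  note P = parts[OF main(1)[OF cvx dom F1 F2 I2 h(2)] main(2)[OF cvx dom F1 F2 I2 h(2)]]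
  have epos: "\<forall>t. 0 < expneg t" by (simp add: expneg_def)
  have emeas: "expneg \<in> borel_measurable borel" unfolding expneg_def by measurable
  obtain x0 where x0: "x0 \<in> interior (dom_e \<psi>)" using dom by blast
  have ninf: "\<psi> x0 \<noteq> -\<infinity>" using cvx unfolding convex_ereal_def by blast
  have "\<psi> x0 < \<infinity>" using x0 interior_subset unfolding dom_e_def by blast
  then obtain a0 where a0: "\<psi> x0 = ereal a0" using ninf by (cases "\<psi> x0") auto
  have lc: "log_concave_on (Xset (legendre \<psi>)) (\<lambda>y. expneg (fin (legendre \<psi>) y))"
    by (rule expneg_logconc[OF leg_cvx[OF cvx a0]])
  have E: "as_orlicz_inf h expneg expneg \<psi> \<le> G_orlicz_inf h expneg expneg \<psi> \<and>
           G_orlicz_inf h expneg expneg \<psi> \<le> orlicz_bound h expneg expneg \<psi>"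
      "as_orlicz_sup h expneg expneg \<psi> \<ge> G_orlicz_sup h expneg expneg \<psi> \<and>
           G_orlicz_sup h expneg expneg \<psi> \<ge> orlicz_bound h expneg expneg \<psi>"
    if "0 < IcompF expneg (legendre \<psi>)" "IcompF expneg (legendre \<psi>) < \<infinity>"
  proof -
    note Q = parts[OF main(1)[OF cvx dom epos emeas epos emeas that h(2)] main(2)[OF cvx dom epos emeas epos emeas that h(2)]]
    show "as_orlicz_inf h expneg expneg \<psi> \<le> G_orlicz_inf h expneg expneg \<psi> \<and>
           G_orlicz_inf h expneg expneg \<psi> \<le> orlicz_bound h expneg expneg \<psi>" by (rule Q(2)[OF lc])
    show "as_orlicz_sup h expneg expneg \<psi> \<ge> G_orlicz_sup h expneg expneg \<psi> \<and>
           G_orlicz_sup h expneg expneg \<psi> \<ge> orlicz_bound h expneg expneg \<psi>" by (rule Q(4)[OF lc])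
  qed
  show ?thesis using P E by blast
qed

end
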